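(* Let $V$ be a finite nonempty set and $f:\{0,1\}^V\to\{0,1\}^V$. If $f$ is even or odd, then for every $x\in\{0,1\}^V$ every vertex of the local interaction graph $Gf(x)$ has odd out-degree; in particular $Gf(x)$ has a cycle.
   Context: $\oplus$ is componentwise addition mod 2; $\|x\|$ is the number of $1$s of $x$, and $x$ is even (odd) if $\|x\|$ is even (odd). The conjugate is $\tilde f(x)=f(x)\oplus x$; $f$ is even (odd) if $\tilde f(\{0,1\}^V)$ is exactly the set of even (odd) points of $\{0,1\}^V$. For $x^{j\alpha}$ the point equal to $x$ except its $j$-component is $\alpha$, $Gf(x)$ is the signed digraph on $V$ with a positive arc from $j$ to $i$ if $f_i(x^{j1})-f_i(x^{j0})=1$ and a negative arc if it equals $-1$ (loops allowed; out-degree counts loops). A cycle is a subgraph whose underlying unsigned digraph is a directed cycle. *)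

theory Defs
  imports Main
begin

text \<open>Points of {0,1}^V are functions V \<Rightarrow> bool (True = 1), V a finite type.\<close>

definition xor_pt :: "('v \<Rightarrow> bool) \<Rightarrow> ('v \<Rightarrow> bool) \<Rightarrow> ('v \<Rightarrow> bool)" where
  "xor_pt x y = (\<lambda>i. x i \<noteq> y i)"

definition weight :: "('v::finite \<Rightarrow> bool) \<Rightarrow> nat" where
  "weight x = card {i. x i}"

definition conjugate :: "(('v \<Rightarrow> bool) \<Rightarrow> ('v \<Rightarrow> bool)) \<Rightarrow> ('v \<Rightarrow> bool) \<Rightarrow> ('v \<Rightarrow> bool)" where
  "conjugate f x = xor_pt (f x) x"

definition even_map :: "(('v::finite \<Rightarrow> bool) \<Rightarrow> ('v \<Rightarrow> bool)) \<Rightarrow> bool" where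
  "even_map f \<longleftrightarrow> range (conjugate f) = {x. even (weight x)}"

definition odd_map :: "(('v::finite \<Rightarrow> bool) \<Rightarrow> ('v \<Rightarrow> bool)) \<Rightarrow> bool" where
  "odd_map f \<longleftrightarrow> range (conjugate f) = {x. odd (weight x)}"

text \<open>Signed arcs of the local interaction graph Gf(x): (j, s, i) is an arc from j to i
  with sign s (True = positive, False = negative).  With x^{j\<alpha>} = x(j := \<alpha>),
  f_i(x^{j1}) - f_i(x^{j0}) = 1 gives a positive arc, = -1 a negative arc.\<close>

definition local_graph :: "(('v \<Rightarrow> bool) \<Rightarrow> ('v \<Rightarrow> bool)) \<Rightarrow> ('v \<Rightarrow> bool) \<Rightarrow> ('v \<times> bool \<times> 'v) set" where
  "local_graph f x =
     {(j, True, i) | j i. f (x(j := True)) i \<and> \<not> f (x(j := False)) i} \<union>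
     {(j, False, i) | j i. \<not> f (x(j := True)) i \<and> f (x(j := False)) i}"

definition out_degree :: "('v \<times> bool \<times> 'v) set \<Rightarrow> 'v \<Rightarrow> nat" where
  "out_degree G j = card {(s, i). (j, s, i) \<in> G}"

definition has_cycle :: "('v \<times> bool \<times> 'v) set \<Rightarrow> bool" where
  "has_cycle G \<longleftrightarrow> (\<exists>vs. vs \<noteq> [] \<and> distinct vs \<and>
     (\<forall>n < length vs. \<exists>s. (vs ! n, s, vs ! ((Suc n) mod length vs)) \<in> G))"

end

theory Submission
  imports Defs
begin

lemma weight_xor:
  fixes a b :: "'v::finite \<Rightarrow> bool"
  shows "even (weight (xor_pt a b)) \<longleftrightarrow> (even (weight a) \<longleftrightarrow> even (weight b))"
proof -
  let ?A = "{i. a i}" and ?B = "{i. b i}" and ?S = "{i. a i \<noteq> b i}"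
  have u: "card ?A + card ?B = card (?A \<union> ?B) + card (?A \<inter> ?B)"
    by (rule card_Un_Int) auto
  have "?A \<union> ?B = ?S \<union> (?A \<inter> ?B)" by auto
  moreover have "?S \<inter> (?A \<inter> ?B) = {}" by auto
  ultimately have "card (?A \<union> ?B) = card ?S + card (?A \<inter> ?B)"
    by (simp add: card_Un_disjoint)
  with u have "card ?A + card ?B = card ?S + 2 * card (?A \<inter> ?B)" by simp
  then show ?thesis unfolding weight_def xor_pt_def
    by (metis even_add even_mult_iff even_numeral)
qed

lemma weight_unit: "weight (\<lambda>i::'v::finite. i = j) = 1"
  unfolding weight_def by simp

lemma odd_deg:
  fixes f :: "('v::finite \<Rightarrow> bool) \<Rightarrow> ('v \<Rightarrow> bool)"
  assumes "even_map f \<or> odd_map f"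
  shows "odd (out_degree (local_graph f x) j)"
proof -
  define y where "y = x(j := False)"
  define z where "z = x(j := True)"
  have par: "even (weight (conjugate f y)) \<longleftrightarrow> even (weight (conjugate f z))"
    using assms unfolding even_map_def odd_map_def
    by (metis (mono_tags, lifting) mem_Collect_eq rangeI)
  have eq: "xor_pt (conjugate f y) (conjugate f z) = xor_pt (xor_pt (f y) (f z)) (\<lambda>i. i = j)"
    unfolding conjugate_def xor_pt_def y_def z_def by (auto simp: fun_eq_iff)
  have "even (weight (xor_pt (conjugate f y) (conjugate f z)))"
    using par weight_xor by blast
  hence o: "odd (weight (xor_pt (f y) (f z)))"
    using eq weight_xor[of "xor_pt (f y) (f z)" "\<lambda>i. i = j"] weight_unit[of j] by simp
  have s: "{(s, i). (j, s, i) \<in> local_graph f x} = (\<lambda>i. (f z i, i)) ` {i. f y i \<noteq> f z i}"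
    unfolding local_graph_def y_def z_def by auto
  have "out_degree (local_graph f x) j = card {i. f y i \<noteq> f z i}"
    unfolding out_degree_def s by (rule card_image) (auto simp: inj_on_def)
  with o show ?thesis unfolding weight_def xor_pt_def by simp
qed

lemma cycle_exists:
  fixes G :: "('v::finite \<times> bool \<times> 'v) set"
  assumes "\<And>j. \<exists>s i. (j, s, i) \<in> G"
  shows "has_cycle G"
proof -
  obtain sc where sc: "\<And>j. \<exists>s. (j, s, sc j) \<in> G"
    using assms by metis
  obtain v0 :: 'v where True by simp
  define seq where "seq n = (sc ^^ n) v0" for n
  have seqS: "seq (Suc n) = sc (seq n)" for n unfolding seq_def by simp
  have "\<not> inj seq"
    using finite_imageD[of seq UNIV] infinite_UNIV_nat by (metis finite)
  then obtain a b where ab: "seq a = seq b" "a \<noteq> b" unfolding inj_def by blast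
  define P where "P n = (\<exists>m<n. seq m = seq n)" for n
  have "\<exists>n. P n" using ab unfolding P_def by (metis linorder_neqE_nat)
  define n where "n = (LEAST n. P n)"
  have Pn: "P n" unfolding n_def using \<open>\<exists>n. P n\<close> by (metis LeastI)
  have minP: "\<And>k. k < n \<Longrightarrow> \<not> P k" unfolding n_def using not_less_Least by blast
  obtain m where m: "m < n" "seq m = seq n" using Pn unfolding P_def by blast
  define vs where "vs = map (\<lambda>k. seq (m + k)) [0..<n - m]"
  have len: "length vs = n - m" unfolding vs_def by simp
  have nth: "k < n - m \<Longrightarrow> vs ! k = seq (m + k)" for k unfolding vs_def by simp
  have "distinct vs"
    unfolding distinct_conv_nth len
  proof (intro allI impI)
    fix i k assume i: "i < n - m" and k: "k < n - m" and ne: "i \<noteq> k"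
    show "vs ! i \<noteq> vs ! k"
    proof
      assume "vs ! i = vs ! k"
      hence e: "seq (m + i) = seq (m + k)" using nth i k by simp
      show False
      proof (cases "i < k")
        case True
        then show False using minP[of "m + k"] k e unfolding P_def by auto
      next
        case False
        then have "m + k < m + i" using ne by simp
        then show False using minP[of "m + i"] i e unfolding P_def by (metis add_less_cancel_left less_diff_conv add.commute)
      qed
    qed
  qed
  moreover have "vs \<noteq> []" using len m by auto
  moreover have "\<forall>k < length vs. \<exists>s. (vs ! k, s, vs ! (Suc k mod length vs)) \<in> G"
  proof (intro allI impI)
    fix k assume k: "k < length vs"
    show "\<exists>s. (vs ! k, s, vs ! (Suc k mod length vs)) \<in> G"
    proof (cases "Suc k < length vs")
      case True
      then have "vs ! (Suc k mod length vs) = sc (vs ! k)"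
        using nth len k seqS by simp
      then show ?thesis using sc by metis
    next
      case False
      then have "Suc k = length vs" using k by simp
      then have "vs ! (Suc k mod length vs) = seq m" using nth len k m by simp
      moreover have "m + k = n - 1" using len \<open>Suc k = length vs\<close> m by simp
      moreover have "vs ! k = seq (m + k)" using nth len k by simp
      moreover have "sc (seq (n - 1)) = seq n" using seqS[of "n - 1"] m by simp
      ultimately show ?thesis using sc m by (metis)
    qed
  qed
  ultimately show ?thesis unfolding has_cycle_def by blast
qed

theorem proposition4:
  fixes f :: "('v::finite \<Rightarrow> bool) \<Rightarrow> ('v \<Rightarrow> bool)"
  assumes "even_map f \<or> odd_map f"
  shows "\<forall>x. (\<forall>j. odd (out_degree (local_graph f x) j)) \<and> has_cycle (local_graph f x)"
proof (intro allI conjI)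
  fix x
  show od: "\<And>j. odd (out_degree (local_graph f x) j)" using odd_deg assms by blast
  show "has_cycle (local_graph f x)"
  proof (rule cycle_exists)
    fix j
    have "out_degree (local_graph f x) j \<noteq> 0" using od[of j] by (metis even_zero)
    hence "{(s, i). (j, s, i) \<in> local_graph f x} \<noteq> {}" unfolding out_degree_def by force
    then show "\<exists>s i. (j, s, i) \<in> local_graph f x" by auto
  qed
qed

end
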